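(* Let $c\colon G\to G_0$ be a collapse of finite connected graphs. Then $F_G\circ c^*=F_{G_0}$ on $\mathcal M(G_0)$, i.e. $F_G(c^*(\ell))=F_{G_0}(\ell)$ for all $\ell\in\mathcal M(G_0)$.
   Context: A graph has oriented edge set $E$ with maps $o,\tau$ to the vertex set, a fixed-point-free involution $e\mapsto\bar e$ with $o(\bar e)=\tau(e)$, and orientation $E_+$. $\mathcal M(G)=\mathbb R_{>0}^{|E_+|}$ is the set of length functions, extended to $E$ by $\ell(\bar e)=\ell(e)$. For any $f\in\mathbb R^{|E_+|}$ (extended symmetrically), $A_{G,f}(e,e')=A_G(e,e')\exp(-f(e))$ where $A_G(e,e')=1$ if $\tau(e)=o(e')$ and $e'\ne\bar e$ and $0$ otherwise, and $F_G(f)=\det(I-A_{G,f})$, which is defined on all of $\mathbb R^{|E_+|}$. A collapse $c\colon G\to G_0$ is a surjection such that each edge of $G$ maps to a vertex or to an edge of $G_0$ and $c^{-1}(x)$ is a contractible subgraph for every point $x$ of $G_0$. The map $c^*\colon\mathcal M(G_0)\to\mathbb R_{\ge0}^{|E_+|}$ is $c^*(\ell)(e)=\ell(c(e))$ if $c(e)$ is an edge and $c^*(\ell)(e)=0$ otherwise. *)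

theory Defs
  imports Complex_Main "HOL-Combinatorics.Permutations"
begin

text \<open>Serre-style graphs: vertex set, oriented edge set, origin/terminus maps
 and a fixed-point-free edge-reversing involution.\<close>

record ('v, 'e) sgraph =
  verts :: "'v set"
  edges :: "'e set"
  org   :: "'e \<Rightarrow> 'v"
  tgt   :: "'e \<Rightarrow> 'v"
  rev   :: "'e \<Rightarrow> 'e"

definition sgraph :: "('v, 'e) sgraph \<Rightarrow> bool" where
  "sgraph G \<longleftrightarrow>
     (\<forall>e\<in>edges G. org G e \<in> verts G \<and> tgt G e \<in> verts G \<and> rev G e \<in> edges G
        \<and> rev G (rev G e) = e \<and> rev G e \<noteq> e \<and> org G (rev G e) = tgt G e)"

definition finite_sgraph :: "('v, 'e) sgraph \<Rightarrow> bool" where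
  "finite_sgraph G \<longleftrightarrow> sgraph G \<and> finite (verts G) \<and> finite (edges G)"

fun walk :: "('v, 'e) sgraph \<Rightarrow> 'v \<Rightarrow> 'e list \<Rightarrow> 'v \<Rightarrow> bool" where
  "walk G u [] v \<longleftrightarrow> u = v \<and> u \<in> verts G"
| "walk G u (e # es) v \<longleftrightarrow> e \<in> edges G \<and> org G e = u \<and> walk G (tgt G e) es v"

definition reduced :: "('v, 'e) sgraph \<Rightarrow> 'e list \<Rightarrow> bool" where
  "reduced G es \<longleftrightarrow> (\<forall>i. Suc i < length es \<longrightarrow> es ! Suc i \<noteq> rev G (es ! i))"

definition connected_sgraph :: "('v, 'e) sgraph \<Rightarrow> bool" where
  "connected_sgraph G \<longleftrightarrow> verts G \<noteq> {} \<and> (\<forall>u\<in>verts G. \<forall>v\<in>verts G. \<exists>es. walk G u es v)"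

text \<open>Contractible (sub)graph = tree: nonempty, connected, no circuit
 (no nonempty reduced closed edge path).\<close>
definition tree :: "('v, 'e) sgraph \<Rightarrow> bool" where
  "tree G \<longleftrightarrow> connected_sgraph G \<and> \<not> (\<exists>v es. es \<noteq> [] \<and> walk G v es v \<and> reduced G es)"

text \<open>A collapse c : G \<rightarrow> G0 is given by its vertex map cV and its edge map cE,
 which sends each edge either to a vertex (Inl) or to an edge (Inr) of G0.\<close>
definition fiber :: "('v, 'e) sgraph \<Rightarrow> ('v \<Rightarrow> 'w) \<Rightarrow> ('e \<Rightarrow> 'w + 'f) \<Rightarrow> 'w \<Rightarrow> ('v, 'e) sgraph" where
  "fiber G cV cE w = \<lparr>verts = {v\<in>verts G. cV v = w}, edges = {e\<in>edges G. cE e = Inl w},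
                      org = org G, tgt = tgt G, rev = rev G\<rparr>"

definition collapse ::
  "('v, 'e) sgraph \<Rightarrow> ('w, 'f) sgraph \<Rightarrow> ('v \<Rightarrow> 'w) \<Rightarrow> ('e \<Rightarrow> 'w + 'f) \<Rightarrow> bool" where
  "collapse G G0 cV cE \<longleftrightarrow>
     (\<forall>v\<in>verts G. cV v \<in> verts G0) \<and>
     (\<forall>e\<in>edges G. (case cE e of
         Inl w \<Rightarrow> w \<in> verts G0 \<and> cV (org G e) = w \<and> cV (tgt G e) = w \<and> cE (rev G e) = Inl w
       | Inr f \<Rightarrow> f \<in> edges G0 \<and> cV (org G e) = org G0 f \<and> cV (tgt G e) = tgt G0 f
                   \<and> cE (rev G e) = Inr (rev G0 f))) \<and>
     (\<forall>f\<in>edges G0. \<exists>!e. e \<in> edges G \<and> cE e = Inr f) \<and>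
     (\<forall>w\<in>verts G0. tree (fiber G cV cE w))"

definition set_det :: "'a set \<Rightarrow> ('a \<Rightarrow> 'a \<Rightarrow> real) \<Rightarrow> real" where
  "set_det S M = (\<Sum>p | p permutes S. of_int (sign p) * (\<Prod>e\<in>S. M e (p e)))"

definition edge_matrix :: "('v, 'e) sgraph \<Rightarrow> ('e \<Rightarrow> real) \<Rightarrow> 'e \<Rightarrow> 'e \<Rightarrow> real" where
  "edge_matrix G f e e' = (if tgt G e = org G e' \<and> e' \<noteq> rev G e then exp (- f e) else 0)"

definition F_graph :: "('v, 'e) sgraph \<Rightarrow> ('e \<Rightarrow> real) \<Rightarrow> real" where
  "F_graph G f = set_det (edges G) (\<lambda>e e'. (if e = e' then 1 else 0) - edge_matrix G f e e')"

definition cstar :: "('e \<Rightarrow> 'w + 'f) \<Rightarrow> ('f \<Rightarrow> real) \<Rightarrow> 'e \<Rightarrow> real" where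
  "cstar cE l e = (case cE e of Inl _ \<Rightarrow> 0 | Inr f \<Rightarrow> l f)"

end

theory Submission
  imports Defs
begin


lemma set_det_identical_rows:
  assumes fin: "finite S" and r: "r \<in> S" and k: "k \<in> S" and rk: "r \<noteq> k"
    and eq: "\<And>j. M r j = M k j"
  shows "set_det S M = 0"
proof -
  let ?t = "Transposition.transpose r k"
  let ?g = "\<lambda>p. of_int (sign p) * (\<Prod>e\<in>S. M e (p e))"
  have perm_t: "?t permutes S" using r k by (simp add: permutes_swap_id)
  have A: "sum ?g {p. p permutes S} = sum (\<lambda>p. ?g (p \<circ> ?t)) {p. p permutes S}"
  proof -
    have tt: "p \<circ> ?t \<circ> ?t = p" for p :: "'a \<Rightarrow> 'a" by (simp add: fun_eq_iff)
    show ?thesis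
      by (rule sum.reindex_bij_witness[of _ "\<lambda>p. p \<circ> ?t" "\<lambda>p. p \<circ> ?t"])
         (auto simp: tt intro: permutes_compose[OF perm_t])
  qed
  have B: "?g (p \<circ> ?t) = - ?g p" if p: "p permutes S" for p
  proof -
    have "sign (p \<circ> ?t) = sign p * sign ?t"
      by (rule sign_compose) (use p fin perm_t in \<open>auto intro: permutes_imp_permutation\<close>)
    also have "\<dots> = - sign p" using rk by (simp add: sign_swap_id)
    finally have s: "sign (p \<circ> ?t) = - sign p" .
    have "(\<Prod>e\<in>S. M e ((p \<circ> ?t) e)) = (\<Prod>e\<in>S. M e (p e))"
    proof -
      have "(\<Prod>e\<in>S. M e ((p \<circ> ?t) e)) = (\<Prod>e\<in>S. M (?t e) (p e))"
        by (rule prod.reindex_bij_witness[of _ ?t ?t]) (use r k in \<open>auto simp: Transposition.transpose_def\<close>)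
      also have "\<dots> = (\<Prod>e\<in>S. M e (p e))"
        by (rule prod.cong) (auto simp: Transposition.transpose_def eq)
      finally show ?thesis .
    qed
    then show ?thesis using s by simp
  qed
  have X: "sum ?g {p. p permutes S} = - sum ?g {p. p permutes S}" using A B by (simp add: sum_negf)
  show ?thesis using X unfolding set_det_def by linarith
qed

lemma set_det_row_add:
  assumes fin: "finite S" and r: "r \<in> S" and k: "k \<in> S" and rk: "r \<noteq> k"
  shows "set_det S (\<lambda>e j. if e = k then M k j + a * M r j else M e j) = set_det S M"
proof -
  define M' where "M' = (\<lambda>e j. if e = k then M r j else M e j)"
  have z: "set_det S M' = 0"
    by (rule set_det_identical_rows[OF fin r k rk]) (simp add: M'_def rk)
  have P: "(\<Prod>e\<in>S. (if e = k then M k (p e) + a * M r (p e) else M e (p e)))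
         = (\<Prod>e\<in>S. M e (p e)) + a * (\<Prod>e\<in>S. M' e (p e))" for p
  proof -
    have "(\<Prod>e\<in>S. (if e = k then M k (p e) + a * M r (p e) else M e (p e)))
        = (M k (p k) + a * M r (p k)) * (\<Prod>e\<in>S-{k}. M e (p e))"
      by (subst prod.remove[OF fin k]) (auto intro!: prod.cong)
    moreover have "(\<Prod>e\<in>S. M e (p e)) = M k (p k) * (\<Prod>e\<in>S-{k}. M e (p e))"
      by (subst prod.remove[OF fin k]) simp
    moreover have "(\<Prod>e\<in>S. M' e (p e)) = M r (p k) * (\<Prod>e\<in>S-{k}. M e (p e))"
      by (subst prod.remove[OF fin k]) (auto simp: M'_def intro!: prod.cong)
    ultimately show ?thesis by (simp add: algebra_simps)
  qed
  have "set_det S (\<lambda>e j. if e = k then M k j + a * M r j else M e j)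
      = set_det S M + a * set_det S M'"
  proof -
    have "set_det S (\<lambda>e j. if e = k then M k j + a * M r j else M e j)
       = (\<Sum>p | p permutes S. of_int (sign p) * (\<Prod>e\<in>S. M e (p e))
             + a * (of_int (sign p) * (\<Prod>e\<in>S. M' e (p e))))"
      unfolding set_det_def
    proof (rule sum.cong[OF refl])
      fix p
      have "(\<Prod>e\<in>S. (if e = k then M k (p e) + a * M r (p e) else M e (p e)))
         = (\<Prod>e\<in>S. M e (p e)) + a * (\<Prod>e\<in>S. M' e (p e))" by (rule P)
      then show "of_int (sign p) * (\<Prod>e\<in>S. (\<lambda>e j. if e = k then M k j + a * M r j else M e j) e (p e))
         = of_int (sign p) * (\<Prod>e\<in>S. M e (p e)) + a * (of_int (sign p) * (\<Prod>e\<in>S. M' e (p e)))"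
        by (simp add: distrib_left)
    qed
    also have "\<dots> = set_det S M + a * set_det S M'"
      unfolding set_det_def by (simp add: sum.distrib sum_distrib_left)
    finally show ?thesis .
  qed
  then show ?thesis using z by simp
qed

lemma set_det_rows_add:
  assumes fin: "finite S" and r: "r \<in> S" and K: "K \<subseteq> S" "r \<notin> K"
  shows "set_det S (\<lambda>e j. if e \<in> K then M e j + c e * M r j else M e j) = set_det S M"
proof -
  have "finite K" using K fin finite_subset by blast
  then show ?thesis using K
  proof (induction K rule: finite_induct)
    case empty then show ?case by simp
  next
    case (insert k K0)
    define N where "N = (\<lambda>e j. if e \<in> K0 then M e j + c e * M r j else M e j)"
    have eq: "(\<lambda>e j. if e \<in> insert k K0 then M e j + c e * M r j else M e j)
        = (\<lambda>e j. if e = k then N k j + c k * N r j else N e j)"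
      using insert by (auto simp: N_def fun_eq_iff)
    have "set_det S (\<lambda>e j. if e \<in> insert k K0 then M e j + c e * M r j else M e j) = set_det S N"
      unfolding eq
      by (rule set_det_row_add) (use fin r insert in auto)
    also have "\<dots> = set_det S M" unfolding N_def using insert by simp
    finally show ?case .
  qed
qed

lemma permutes_remove_fix:
  assumes "p permutes S" "p c = c"
  shows "p permutes (S - {c})"
proof -
  have "\<forall>x. x \<notin> S - {c} \<longrightarrow> p x = x" using assms(2) permutes_not_in[OF assms(1)] by auto
  moreover have "\<forall>y. \<exists>!x. p x = y" using assms(1) unfolding permutes_def by blast
  ultimately show ?thesis unfolding permutes_def by blast
qed

lemma set_det_unit_col:
  assumes fin: "finite S" and c: "c \<in> S"
    and col: "\<And>e. e \<in> S \<Longrightarrow> M e c = (if e = c then 1 else 0)"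
  shows "set_det S M = set_det (S - {c}) M"
proof -
  let ?g = "\<lambda>p. of_int (sign p) * (\<Prod>e\<in>S. M e (p e))"
  let ?h = "\<lambda>p. of_int (sign p) * (\<Prod>e\<in>S-{c}. M e (p e))"
  have sub: "{p. p permutes (S - {c})} \<subseteq> {p. p permutes S}"
    by (auto intro: permutes_subset)
  have "sum ?g {p. p permutes S} = sum ?g {p. p permutes (S - {c})}"
  proof (rule sum.mono_neutral_right[OF _ sub])
    show "finite {p. p permutes S}" using fin by (rule finite_permutations)
    show "\<forall>p\<in>{p. p permutes S} - {p. p permutes (S - {c})}. ?g p = 0"
    proof
      fix p assume "p \<in> {p. p permutes S} - {p. p permutes (S - {c})}"
      then have p: "p permutes S" and np: "\<not> p permutes (S - {c})" by auto
      have pc: "p c \<noteq> c"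
      proof
        assume "p c = c"
        then have "p permutes (S - {c})" by (rule permutes_remove_fix[OF p])
        then show False using np by contradiction
      qed
      define e where "e = inv p c"
      have pe: "p e = c" unfolding e_def by (rule permutes_inverses(1)[OF p])
      have eS: "e \<in> S" unfolding e_def using permutes_in_image[OF permutes_inv[OF p]] c by simp
      have "e \<noteq> c" using pe pc by auto
      then have z: "M e (p e) = 0" using col[OF eS] pe by simp
      have "(\<Prod>e\<in>S. M e (p e)) = 0" by (rule prod_zero[OF fin]) (use eS z in blast)
      then show "?g p = 0" by simp
    qed
  qed
  also have "\<dots> = sum ?h {p. p permutes (S - {c})}"
  proof (rule sum.cong[OF refl])
    fix p assume "p \<in> {p. p permutes (S - {c})}"
    then have "p c = c" by (simp add: permutes_not_in)
    then have "(\<Prod>e\<in>S. M e (p e)) = (\<Prod>e\<in>S-{c}. M e (p e))"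
      by (subst prod.remove[OF fin c]) (simp add: col[OF c])
    then show "?g p = ?h p" by simp
  qed
  finally show ?thesis unfolding set_det_def by simp
qed

lemma set_det_reindex:
  assumes fin: "finite S" and h: "bij_betw h S S'"
    and M: "\<And>e e'. e \<in> S \<Longrightarrow> e' \<in> S \<Longrightarrow> M e e' = M' (h e) (h e')"
  shows "set_det S M = set_det S' M'"
proof -
  let ?phi = "\<lambda>p x. if x \<in> S' then h (p (inv_into S h x)) else x"
  let ?g = "\<lambda>q. of_int (sign q) * (\<Prod>e\<in>S'. M' e (q e))"
  have bp: "bij_betw ?phi {p. p permutes S} {p. p permutes S'}"
    by (rule bij_betw_permutations[OF h])
  have "set_det S' M' = sum ?g {p. p permutes S'}" unfolding set_det_def by simp
  also have "\<dots> = sum (\<lambda>p. ?g (?phi p)) {p. p permutes S}"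
    by (rule sum.reindex_bij_betw[OF bp, symmetric])
  also have "\<dots> = sum (\<lambda>p. of_int (sign p) * (\<Prod>e\<in>S. M e (p e))) {p. p permutes S}"
  proof (rule sum.cong[OF refl])
    fix p assume "p \<in> {p. p permutes S}"
    then have p: "p permutes S" by simp
    interpret pb: permutes_bij_finite p S S' h "inv_into S h" "?phi p"
      by unfold_locales (use p h fin in \<open>auto simp: bij_betw_inv_into_left\<close>)
    have s: "sign (?phi p) = sign p" by (rule pb.sign_p')
    have "(\<Prod>e\<in>S'. M' e (?phi p e)) = (\<Prod>e\<in>S. M' (h e) (?phi p (h e)))"
      by (rule prod.reindex_bij_betw[OF h, symmetric])
    also have "\<dots> = (\<Prod>e\<in>S. M e (p e))"
    proof (rule prod.cong[OF refl])
      fix e assume e: "e \<in> S"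
      have he: "h e \<in> S'" using h e by (auto dest: bij_betwE)
      have pe: "p e \<in> S" using p e by (simp add: permutes_in_image)
      have "?phi p (h e) = h (p e)" using he e h by (simp add: bij_betw_inv_into_left)
      then show "M' (h e) (?phi p (h e)) = M e (p e)" using M[OF e pe] by simp
    qed
    finally show "?g (?phi p) = of_int (sign p) * (\<Prod>e\<in>S. M e (p e))" using s by simp
  qed
  also have "\<dots> = set_det S M" unfolding set_det_def by simp
  finally show ?thesis by simp
qed



definition contract :: "('v, 'e) sgraph \<Rightarrow> 'e \<Rightarrow> ('v, 'e) sgraph" where
  "contract G t = G\<lparr>verts := verts G - {tgt G t}, edges := edges G - {t, rev G t},
      org := (\<lambda>e. if org G e = tgt G t then org G t else org G e),
      tgt := (\<lambda>e. if tgt G e = tgt G t then org G t else tgt G e)\<rparr>"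

lemma sgraph_facts:
  assumes "sgraph G" "e \<in> edges G"
  shows "org G e \<in> verts G" "tgt G e \<in> verts G" "rev G e \<in> edges G" "rev G (rev G e) = e"
    "rev G e \<noteq> e" "org G (rev G e) = tgt G e" "tgt G (rev G e) = org G e"
  using assms unfolding sgraph_def by (metis)+

lemma set_det_cong:
  assumes "finite S" "\<And>e e'. e \<in> S \<Longrightarrow> e' \<in> S \<Longrightarrow> M e e' = N e e'"
  shows "set_det S M = set_det S N"
  by (rule set_det_reindex[of S id S M N]) (use assms in auto)

lemma F_contract:
  assumes fg: "finite_sgraph G" and t: "t \<in> edges G" and uv: "org G t \<noteq> tgt G t"
    and f0: "f t = 0" "f (rev G t) = 0"
  shows "F_graph G f = F_graph (contract G t) f"
proof -
  have sg: "sgraph G" and fin: "finite (edges G)" using fg unfolding finite_sgraph_def by auto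
  define u where "u = org G t"
  define v where "v = tgt G t"
  define s where "s = rev G t"
  define E where "E = edges G"
  define x where "x = (\<lambda>e. exp (- f e))"
  define M where "M = (\<lambda>e e'. (if e = e' then 1 else 0) - edge_matrix G f e e')"
  note SF = sgraph_facts[OF sg]
  have uv': "u \<noteq> v" using uv by (simp add: u_def v_def)
  have sE: "s \<in> E" and tE: "t \<in> E" using SF t by (auto simp: s_def E_def)
  have st: "s \<noteq> t" using SF(5)[OF t] by (simp add: s_def)
  have orgs: "org G s = v" and tgts: "tgt G s = u" using SF t by (auto simp: s_def u_def v_def)
  have revs: "rev G s = t" using SF t by (simp add: s_def)
  have xt: "x t = 1" "x s = 1" using f0 by (auto simp: x_def s_def)
  have rev_inj: "rev G a = rev G b \<longleftrightarrow> a = b" if "a \<in> E" "b \<in> E" for a b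
    using SF(4) that unfolding E_def by metis
  have Mdef: "M e e' = (if e = e' then 1 else 0) - (if tgt G e = org G e' \<and> e' \<noteq> rev G e then x e else 0)" for e e'
    by (simp add: M_def edge_matrix_def x_def)
  define I where "I = {e\<in>E. tgt G e = v \<and> e \<noteq> t}"
  define M1 where "M1 = (\<lambda>e j. if e \<in> I then M e j + x e * M s j else M e j)"
  have "set_det E M = set_det E M1"
    unfolding M1_def
    by (rule set_det_rows_add[symmetric]) (use sE tgts uv' fin in \<open>auto simp: I_def E_def\<close>)
  also have "\<dots> = set_det (E - {s}) M1"
  proof (rule set_det_unit_col)
    show "finite E" using fin by (simp add: E_def)
    show "s \<in> E" by (rule sE)
    fix e assume e: "e \<in> E"
    have a: "s = rev G e \<longleftrightarrow> e = t" using rev_inj[OF tE e] by (auto simp: s_def)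
    show "M1 e s = (if e = s then 1 else 0)"
      using e a uv' st unfolding M1_def Mdef by (auto simp: I_def orgs tgts xt)
  qed
  also have "\<dots> = set_det (E - {s}) (\<lambda>e j. if e \<in> {e\<in>E-{s}. tgt G e = u} then M1 e j + x e * M1 t j else M1 e j)"
    by (rule set_det_rows_add[symmetric]) (use tE st uv' fin in \<open>auto simp: E_def v_def\<close>)
  also have "\<dots> = set_det (E - {s} - {t}) (\<lambda>e j. if e \<in> {e\<in>E-{s}. tgt G e = u} then M1 e j + x e * M1 t j else M1 e j)"
  proof (rule set_det_unit_col)
    show "finite (E - {s})" using fin by (simp add: E_def)
    show "t \<in> E - {s}" using tE st by simp
    fix e assume e: "e \<in> E - {s}"
    have a: "t = rev G e \<longleftrightarrow> e = s" using SF(4)[OF t] SF(4)[of e] e unfolding E_def s_def by (metis DiffD1)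
    show "(if e \<in> {e\<in>E-{s}. tgt G e = u} then M1 e t + x e * M1 t t else M1 e t) = (if e = t then 1 else 0)"
      using e a uv' st unfolding M1_def Mdef by (auto simp: I_def orgs tgts xt revs u_def v_def)
  qed
  also have "\<dots> = set_det (E - {s} - {t}) (\<lambda>e e'. (if e = e' then 1 else 0) - edge_matrix (contract G t) f e e')"
  proof (rule set_det_cong)
    show "finite (E - {s} - {t})" using fin by (simp add: E_def)
    fix e e' assume e: "e \<in> E - {s} - {t}" and e': "e' \<in> E - {s} - {t}"
    have ee: "e \<in> E" "e' \<in> E" using e e' by auto
    have re: "rev G e \<in> E" "org G (rev G e) = tgt G e" using SF ee by (auto simp: E_def)
    have a1: "s \<noteq> rev G e" using rev_inj[OF tE ee(1)] e by (auto simp: s_def)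
    have a2: "t \<noteq> rev G e" using rev_inj[OF sE ee(1)] e revs by auto
    have e's: "e' \<noteq> s" "e' \<noteq> t" "e \<noteq> s" "e \<noteq> t" using e e' by auto
    have Mt: "M t e' = - (if org G e' = v then 1 else 0)"
      using e's xt unfolding Mdef by (simp add: v_def s_def[symmetric])
    have Ms: "M s e' = - (if org G e' = u then 1 else 0)"
      using e's xt revs tgts unfolding Mdef by simp
    have Me: "M e e' = (if e = e' then 1 else 0) - (if tgt G e = org G e' \<and> e' \<noteq> rev G e then x e else 0)"
      by (rule Mdef)
    have C: "(if e = e' then 1 else 0) - edge_matrix (contract G t) f e e'
       = (if e = e' then 1 else 0) - (if (if tgt G e = v then u else tgt G e) = (if org G e' = v then u else org G e') \<and> e' \<noteq> rev G e then x e else 0)"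
      by (simp add: edge_matrix_def contract_def x_def u_def v_def)
    have tI: "t \<notin> I" by (simp add: I_def)
    show "(if e \<in> {e\<in>E-{s}. tgt G e = u} then M1 e e' + x e * M1 t e' else M1 e e') =
          (if e = e' then 1 else 0) - edge_matrix (contract G t) f e e'"
    proof (cases "tgt G e = v")
      case True
      then have "e \<in> I" "e \<notin> {e\<in>E-{s}. tgt G e = u}" using ee e's uv' by (auto simp: I_def)
      then have "(if e \<in> {e\<in>E-{s}. tgt G e = u} then M1 e e' + x e * M1 t e' else M1 e e') = M e e' + x e * M s e'"
        by (auto simp: M1_def)
      also have "\<dots> = (if e = e' then 1 else 0) - (if (if tgt G e = v then u else tgt G e) = (if org G e' = v then u else org G e') \<and> e' \<noteq> rev G e then x e else 0)"
        unfolding Me Ms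
        by (cases "org G e' = v"; cases "org G e' = u") (use True re uv' in \<open>simp_all, auto\<close>)
      finally show ?thesis unfolding C .
    next
      case F: False
      show ?thesis
      proof (cases "tgt G e = u")
        case True
        then have "e \<notin> I" "e \<in> {e\<in>E-{s}. tgt G e = u}" using ee e's uv' by (auto simp: I_def)
        then have "(if e \<in> {e\<in>E-{s}. tgt G e = u} then M1 e e' + x e * M1 t e' else M1 e e') = M e e' + x e * M t e'"
          using tI by (auto simp: M1_def)
        also have "\<dots> = (if e = e' then 1 else 0) - (if (if tgt G e = v then u else tgt G e) = (if org G e' = v then u else org G e') \<and> e' \<noteq> rev G e then x e else 0)"
          unfolding Me Mt
          by (cases "org G e' = v"; cases "org G e' = u") (use True F re uv' in \<open>simp_all, auto\<close>)
        finally show ?thesis unfolding C .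
      next
        case False
        then have "e \<notin> I" "e \<notin> {e\<in>E-{s}. tgt G e = u}" using F by (auto simp: I_def)
        then have "(if e \<in> {e\<in>E-{s}. tgt G e = u} then M1 e e' + x e * M1 t e' else M1 e e') = M e e'"
          by (auto simp: M1_def)
        also have "\<dots> = (if e = e' then 1 else 0) - (if (if tgt G e = v then u else tgt G e) = (if org G e' = v then u else org G e') \<and> e' \<noteq> rev G e then x e else 0)"
          unfolding Me
          by (cases "org G e' = v") (use False F uv' in simp_all)
        finally show ?thesis unfolding C .
      qed
    qed
  qed
  finally have fin1: "set_det E M = set_det (E - {s} - {t}) (\<lambda>e e'. (if e = e' then 1 else 0) - edge_matrix (contract G t) f e e')" .
  have ce: "edges (contract G t) = E - {s} - {t}" by (auto simp: contract_def E_def s_def)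
  show ?thesis
    unfolding F_graph_def ce using fin1 by (simp add: M_def E_def)
qed



lemma walk_end_verts: "walk G u es w \<Longrightarrow> w \<in> verts G"
  by (induction es arbitrary: u) auto

lemma walk_start_verts: "sgraph G \<Longrightarrow> walk G u es w \<Longrightarrow> u \<in> verts G"
  by (cases es) (auto simp: sgraph_def)

lemma walk_append:
  assumes "sgraph G"
  shows "walk G u (xs @ ys) w \<longleftrightarrow> (\<exists>m. walk G u xs m \<and> walk G m ys w)"
proof (induction xs arbitrary: u)
  case Nil
  then show ?case using walk_start_verts[OF assms] by auto
qed auto

lemma walk_set: "walk G u es w \<Longrightarrow> set es \<subseteq> edges G"
  by (induction es arbitrary: u) auto

lemma walk_transfer:
  assumes "walk H u es w" "\<forall>e\<in>set es. e \<in> edges H' \<and> org H' e = org H e \<and> tgt H' e = tgt H e"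
    "w \<in> verts H'"
  shows "walk H' u es w"
  using assms by (induction es arbitrary: u) auto

lemma reduced_transfer:
  assumes "reduced H es" "\<forall>e\<in>set es. rev H' e = rev H e"
  shows "reduced H' es"
  using assms unfolding reduced_def by (metis Suc_lessD nth_mem)

lemma tree_transfer:
  assumes "tree H" "verts H' = verts H" "edges H' = edges H"
    "\<forall>e\<in>edges H. org H' e = org H e \<and> tgt H' e = tgt H e \<and> rev H' e = rev H e"
  shows "tree H'"
proof -
  have c: "connected_sgraph H" and nc: "\<not> (\<exists>v es. es \<noteq> [] \<and> walk H v es v \<and> reduced H es)"
    using assms(1) unfolding tree_def by auto
  have "connected_sgraph H'"
    unfolding connected_sgraph_def
  proof (intro conjI ballI)
    show "verts H' \<noteq> {}" using c assms(2) by (simp add: connected_sgraph_def)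
    fix a b assume "a \<in> verts H'" "b \<in> verts H'"
    then have "a \<in> verts H" "b \<in> verts H" using assms(2) by auto
    then have "\<exists>es. walk H a es b" using c unfolding connected_sgraph_def by blast
    then obtain es where "walk H a es b" by blast
    then have "walk H' a es b"
      using walk_set[of H a es b] assms \<open>b \<in> verts H'\<close> \<open>walk H a es b\<close> by (intro walk_transfer[OF \<open>walk H a es b\<close>]) auto
    then show "\<exists>es. walk H' a es b" by blast
  qed
  moreover have "\<not> (\<exists>v es. es \<noteq> [] \<and> walk H' v es v \<and> reduced H' es)"
  proof
    assume "\<exists>v es. es \<noteq> [] \<and> walk H' v es v \<and> reduced H' es"
    then obtain v es where "es \<noteq> []" "walk H' v es v" "reduced H' es" by blast
    moreover have "walk H v es v"
      using walk_set[OF \<open>walk H' v es v\<close>] assms walk_end_verts[OF \<open>walk H' v es v\<close>]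
      by (intro walk_transfer[OF \<open>walk H' v es v\<close>]) auto
    moreover have "reduced H es"
      using walk_set[OF \<open>walk H' v es v\<close>] assms by (intro reduced_transfer[OF \<open>reduced H' es\<close>]) auto
    ultimately show False using nc by blast
  qed
  ultimately show ?thesis unfolding tree_def by blast
qed

lemma reduced_drop_take:
  assumes "reduced G es"
  shows "reduced G (drop i (take j es))"
  using assms unfolding reduced_def by (auto simp: min_def)

lemma tree_walk_distinct:
  assumes sg: "sgraph H" and tr: "tree H" and w: "walk H a es b" and r: "reduced H es"
  shows "distinct es"
proof (rule ccontr)
  assume "\<not> distinct es"
  then obtain i j where ij: "i < j" "j < length es" "es ! i = es ! j"
    by (metis distinct_conv_nth linorder_neqE_nat)
  have "take i es @ drop i (take j es) = take j es" using \<open>i < j\<close>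
    by (metis append_take_drop_id less_imp_le_nat min.absorb1 take_take)
  then have split: "es = take i es @ drop i (take j es) @ drop j es"
    by (metis append.assoc append_take_drop_id)
  from w obtain m1 m2 where w1: "walk H a (take i es) m1" and w2: "walk H m1 (drop i (take j es)) m2"
    and w3: "walk H m2 (drop j es) b"
    using split walk_append[OF sg] by metis
  have dj: "drop j es = es ! j # drop (Suc j) es" using ij by (simp add: Cons_nth_drop_Suc)
  have ne2: "drop i (take j es) \<noteq> []" using ij by simp
  have hd2: "hd (drop i (take j es)) = es ! i" using ij by (simp add: hd_drop_conv_nth)
  have "m1 = org H (es ! i)"
  proof (cases "drop i (take j es)")
    case Nil then show ?thesis using ne2 by simp
  next
    case (Cons y ys) then show ?thesis using w2 hd2 by simp
  qed
  moreover have "m2 = org H (es ! j)" using w3 dj by simp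
  ultimately have "m1 = m2" using ij by simp
  moreover note ne2
  moreover have "reduced H (drop i (take j es))" by (rule reduced_drop_take[OF r])
  ultimately show False using tr w2 unfolding tree_def by blast
qed

lemma reduced_snoc:
  assumes "reduced G es" "es \<noteq> []" "e \<noteq> rev G (last es)"
  shows "reduced G (es @ [e])"
  unfolding reduced_def
proof (intro allI impI)
  fix i assume i: "Suc i < length (es @ [e])"
  show "(es @ [e]) ! Suc i \<noteq> rev G ((es @ [e]) ! i)"
  proof (cases "Suc i < length es")
    case True then show ?thesis using assms(1) unfolding reduced_def by (simp add: nth_append)
  next
    case False
    then have "Suc i = length es" using i by simp
    then have "i = length es - 1" by simp
    then show ?thesis using assms(2,3) False \<open>Suc i = length es\<close> by (simp add: nth_append last_conv_nth)
  qed
qed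

lemma tree_leaf:
  assumes sg: "sgraph H" and tr: "tree H" and fe: "finite (edges H)" and ne: "edges H \<noteq> {}"
  shows "\<exists>t\<in>edges H. org H t \<noteq> tgt H t \<and> {e\<in>edges H. org H e = tgt H t} = {rev H t}"
proof -
  let ?P = "\<lambda>es. \<exists>a b. walk H a es b \<and> reduced H es"
  obtain e0 where e0: "e0 \<in> edges H" using ne by blast
  have P0: "?P [e0]" using e0 sg by (auto simp: sgraph_def reduced_def)
  have bnd: "\<forall>es. ?P es \<longrightarrow> length es < card (edges H) + 1"
  proof (intro allI impI)
    fix es assume "?P es"
    then obtain a b where "walk H a es b" "reduced H es" by blast
    then have "distinct es" "set es \<subseteq> edges H" using tree_walk_distinct[OF sg tr] walk_set[OF \<open>walk H a es b\<close>] by auto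
    then have "length es \<le> card (edges H)" by (metis card_mono distinct_card fe)
    then show "length es < card (edges H) + 1" by simp
  qed
  obtain es where es: "?P es" and max: "\<And>ys. ?P ys \<Longrightarrow> length ys \<le> length es"
    using ex_has_greatest_nat[of ?P "[e0]" length "card (edges H) + 1", OF P0 bnd] by blast
  then obtain a b where w: "walk H a es b" and r: "reduced H es" by blast
  have nemp: "es \<noteq> []" using max[OF P0] by auto
  define t where "t = last es"
  have tin: "t \<in> edges H" using walk_set[OF w] nemp by (auto simp: t_def)
  have wsplit: "walk H a (butlast es @ [t]) b" using w nemp by (simp add: t_def)
  then have bt: "b = tgt H t" using walk_append[OF sg] by auto
  have "org H t \<noteq> tgt H t"
  proof
    assume "org H t = tgt H t"
    then have "walk H (org H t) [t] (org H t)" using tin sg by (auto simp: sgraph_def)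
    moreover have "reduced H [t]" by (simp add: reduced_def)
    ultimately show False using tr unfolding tree_def by blast
  qed
  moreover have "{e\<in>edges H. org H e = tgt H t} = {rev H t}"
  proof
    show "{rev H t} \<subseteq> {e\<in>edges H. org H e = tgt H t}" using tin sg by (auto simp: sgraph_def)
    show "{e\<in>edges H. org H e = tgt H t} \<subseteq> {rev H t}"
    proof
      fix e assume e: "e \<in> {e\<in>edges H. org H e = tgt H t}"
      show "e \<in> {rev H t}"
      proof (rule ccontr)
        assume "e \<notin> {rev H t}"
        then have "reduced H (es @ [e])" using reduced_snoc[OF r nemp] by (simp add: t_def)
        moreover have "walk H a (es @ [e]) (tgt H e)"
          using w e bt walk_append[OF sg] sg by (auto simp: sgraph_def)
        ultimately have "?P (es @ [e])" by blast
        from max[OF this] show False by simp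
      qed
    qed
  qed
  ultimately show ?thesis using tin by blast
qed



lemma tree_remove_leaf:
  assumes sg: "sgraph H" and tr: "tree H" and t: "t \<in> edges H" and uv: "org H t \<noteq> tgt H t"
    and leaf: "{e\<in>edges H. org H e = tgt H t} = {rev H t}"
    and V: "verts H' = verts H - {tgt H t}" and E: "edges H' = edges H - {t, rev H t}"
    and agree: "\<forall>e\<in>edges H'. org H' e = org H e \<and> tgt H' e = tgt H e \<and> rev H' e = rev H e"
  shows "tree H'"
proof -
  note SF = sgraph_facts[OF sg]
  have c: "connected_sgraph H" and nc: "\<not> (\<exists>v es. es \<noteq> [] \<and> walk H v es v \<and> reduced H es)"
    using tr unfolding tree_def by auto
  have "connected_sgraph H'"
    unfolding connected_sgraph_def
  proof (intro conjI ballI)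
    show "verts H' \<noteq> {}" using V SF(1)[OF t] uv by auto
    fix a b assume a: "a \<in> verts H'" and b: "b \<in> verts H'"
    then have "a \<in> verts H" "b \<in> verts H" using V by auto
    then have "\<exists>es. walk H a es b" using c unfolding connected_sgraph_def by blast
    then obtain es0 where "walk H a es0 b" by blast
    then obtain es where w: "walk H a es b" and min: "\<And>ys. walk H a ys b \<Longrightarrow> length es \<le> length ys"
      using ex_has_least_nat[of "\<lambda>es. walk H a es b" es0 length] by blast
    have av: "a \<noteq> tgt H t" and bv: "b \<noteq> tgt H t" using a b V by auto
    have tnot: "t \<notin> set es"
    proof
      assume "t \<in> set es"
      then obtain xs ys where es: "es = xs @ t # ys" by (meson split_list)
      then obtain m where w1: "walk H a xs m" and w2: "walk H m (t # ys) b"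
        using w walk_append[OF sg] by metis
      then have m: "m = org H t" and w3: "walk H (tgt H t) ys b" by auto
      show False
      proof (cases ys)
        case Nil then show False using w3 bv by simp
      next
        case (Cons y zs)
        then have "y \<in> edges H" "org H y = tgt H t" and w4: "walk H (tgt H y) zs b" using w3 by auto
        then have "y = rev H t" using leaf by blast
        then have "tgt H y = m" using SF(7)[OF t] m by simp
        then have "walk H a (xs @ zs) b" using w1 w4 walk_append[OF sg] by blast
        from min[OF this] show False using es Cons by simp
      qed
    qed
    have snot: "rev H t \<notin> set es"
    proof
      assume "rev H t \<in> set es"
      then obtain xs ys where es: "es = xs @ rev H t # ys" by (meson split_list)
      then obtain m where w1: "walk H a xs m" and w2: "walk H m (rev H t # ys) b"
        using w walk_append[OF sg] by metis
      then have m: "m = tgt H t" using SF(6)[OF t] by auto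
      show False
      proof (cases xs rule: rev_exhaust)
        case Nil then show False using w1 m av by simp
      next
        case (snoc xs' y)
        then obtain m' where "walk H m' [y] m" using w1 walk_append[OF sg] by metis
        then have y: "y \<in> edges H" "tgt H y = tgt H t" using m by auto
        then have "rev H y \<in> {e\<in>edges H. org H e = tgt H t}" using SF(3,6)[OF y(1)] by simp
        then have "rev H y = rev H t" using leaf by blast
        then have "y = t" using SF(4)[OF y(1)] SF(4)[OF t] by metis
        then show False using tnot es snoc by simp
      qed
    qed
    have "walk H' a es b"
      using walk_set[OF w] tnot snot E agree b by (intro walk_transfer[OF w]) auto
    then show "\<exists>es. walk H' a es b" by blast
  qed
  moreover have "\<not> (\<exists>v es. es \<noteq> [] \<and> walk H' v es v \<and> reduced H' es)"
  proof
    assume "\<exists>v es. es \<noteq> [] \<and> walk H' v es v \<and> reduced H' es"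
    then obtain v es where ne: "es \<noteq> []" and w: "walk H' v es v" and r: "reduced H' es" by blast
    have ag: "\<forall>e\<in>set es. e \<in> edges H \<and> org H e = org H' e \<and> tgt H e = tgt H' e"
      using walk_set[OF w] E agree by (metis Diff_subset subset_iff)
    have "walk H v es v"
      using ag walk_end_verts[OF w] V by (intro walk_transfer[OF w]) auto
    moreover have "reduced H es"
      using walk_set[OF w] agree by (intro reduced_transfer[OF r]) auto
    ultimately show False using nc ne by blast
  qed
  ultimately show ?thesis unfolding tree_def by blast
qed

lemma fiber_sgraph:
  assumes sg: "sgraph G" and col: "collapse G G0 cV cE"
  shows "sgraph (fiber G cV cE w)"
proof -
  have C: "cV (org G e) = w \<and> cV (tgt G e) = w \<and> cE (rev G e) = Inl w"
    if e: "e \<in> edges G" and ew: "cE e = Inl w" for e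
  proof -
    have "case cE e of Inl w \<Rightarrow> w \<in> verts G0 \<and> cV (org G e) = w \<and> cV (tgt G e) = w \<and> cE (rev G e) = Inl w
       | Inr f \<Rightarrow> f \<in> edges G0 \<and> cV (org G e) = org G0 f \<and> cV (tgt G e) = tgt G0 f
                   \<and> cE (rev G e) = Inr (rev G0 f)"
      using col e unfolding collapse_def by blast
    then show ?thesis using ew by simp
  qed
  show ?thesis unfolding sgraph_def
  proof
    fix e assume e: "e \<in> edges (fiber G cV cE w)"
    then have e1: "e \<in> edges G" "cE e = Inl w" by (simp_all add: fiber_def)
    have c: "cV (org G e) = w" "cV (tgt G e) = w" "cE (rev G e) = Inl w" using C[OF e1] by auto
    note S = sgraph_facts[OF sg e1(1)]
    show "org (fiber G cV cE w) e \<in> verts (fiber G cV cE w) \<and>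
       tgt (fiber G cV cE w) e \<in> verts (fiber G cV cE w) \<and>
       rev (fiber G cV cE w) e \<in> edges (fiber G cV cE w) \<and>
       rev (fiber G cV cE w) (rev (fiber G cV cE w) e) = e \<and>
       rev (fiber G cV cE w) e \<noteq> e \<and>
       org (fiber G cV cE w) (rev (fiber G cV cE w) e) = tgt (fiber G cV cE w) e"
      using c S by (simp add: fiber_def)
  qed
qed

lemma contract_sgraph:
  assumes fg: "finite_sgraph G" and t: "t \<in> edges G" and uv: "org G t \<noteq> tgt G t"
  shows "finite_sgraph (contract G t)"
proof -
  have sg: "sgraph G" using fg by (simp add: finite_sgraph_def)
  note SF = sgraph_facts[OF sg]
  have "sgraph (contract G t)"
    unfolding sgraph_def
  proof
    fix e assume e: "e \<in> edges (contract G t)"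
    then have e1: "e \<in> edges G" "e \<noteq> t" "e \<noteq> rev G t" by (auto simp: contract_def)
    have r1: "rev G e \<noteq> t" using SF(4)[OF e1(1)] e1 by metis
    have r2: "rev G e \<noteq> rev G t" using SF(4)[OF e1(1)] SF(4)[OF t] e1 by metis
    show "org (contract G t) e \<in> verts (contract G t) \<and> tgt (contract G t) e \<in> verts (contract G t) \<and>
        rev (contract G t) e \<in> edges (contract G t) \<and> rev (contract G t) (rev (contract G t) e) = e \<and>
        rev (contract G t) e \<noteq> e \<and> org (contract G t) (rev (contract G t) e) = tgt (contract G t) e"
      using SF[OF e1(1)] SF(1)[OF t] uv r1 r2 by (auto simp: contract_def)
  qed
  then show ?thesis using fg by (auto simp: finite_sgraph_def contract_def)
qed

lemma collapse_contract:
  assumes sg: "sgraph G" and col: "collapse G G0 cV cE" and t: "t \<in> edges G" and tw: "cE t = Inl w"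
    and uv: "org G t \<noteq> tgt G t"
    and leaf: "{e\<in>edges (fiber G cV cE w). org G e = tgt G t} = {rev G t}"
  shows "collapse (contract G t) G0 cV cE"
proof -
  note SF = sgraph_facts[OF sg]
  let ?G' = "contract G t"
  have colE: "\<And>e. e \<in> edges G \<Longrightarrow> (case cE e of
         Inl w \<Rightarrow> w \<in> verts G0 \<and> cV (org G e) = w \<and> cV (tgt G e) = w \<and> cE (rev G e) = Inl w
       | Inr f \<Rightarrow> f \<in> edges G0 \<and> cV (org G e) = org G0 f \<and> cV (tgt G e) = tgt G0 f
                   \<and> cE (rev G e) = Inr (rev G0 f))"
    using col unfolding collapse_def by blast
  have tprop: "w \<in> verts G0" "cV (org G t) = w" "cV (tgt G t) = w" "cE (rev G t) = Inl w"
    using colE[OF t] tw by auto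
  have ko: "cV (org ?G' e) = cV (org G e)" for e using tprop by (simp add: contract_def)
  have kt: "cV (tgt ?G' e) = cV (tgt G e)" for e using tprop by (simp add: contract_def)
  have kr: "rev ?G' = rev G" by (simp add: contract_def)
  have sub: "edges ?G' \<subseteq> edges G" "verts ?G' \<subseteq> verts G" by (auto simp: contract_def)
  have ev: "edges ?G' = edges G - {t, rev G t}" "verts ?G' = verts G - {tgt G t}"
    by (auto simp: contract_def)
  have p1: "\<forall>v\<in>verts ?G'. cV v \<in> verts G0" using col sub unfolding collapse_def by blast
  have p2: "\<forall>e\<in>edges ?G'. (case cE e of
         Inl w \<Rightarrow> w \<in> verts G0 \<and> cV (org ?G' e) = w \<and> cV (tgt ?G' e) = w \<and> cE (rev ?G' e) = Inl w
       | Inr f \<Rightarrow> f \<in> edges G0 \<and> cV (org ?G' e) = org G0 f \<and> cV (tgt ?G' e) = tgt G0 f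
                   \<and> cE (rev ?G' e) = Inr (rev G0 f))"
    unfolding ko kt kr using colE sub by blast
  have p3: "\<forall>f\<in>edges G0. \<exists>!e. e \<in> edges ?G' \<and> cE e = Inr f"
  proof
    fix f assume f: "f \<in> edges G0"
    then have "\<exists>!e. e \<in> edges G \<and> cE e = Inr f" using col unfolding collapse_def by blast
    moreover have "cE e = Inr f \<Longrightarrow> e \<noteq> t \<and> e \<noteq> rev G t" for e using tw tprop(4) by auto
    ultimately show "\<exists>!e. e \<in> edges ?G' \<and> cE e = Inr f" unfolding ev by blast
  qed
  have p4: "\<forall>w'\<in>verts G0. tree (fiber ?G' cV cE w')"
  proof
    fix w' assume w': "w' \<in> verts G0"
    have trw': "tree (fiber G cV cE w')" using col w' unfolding collapse_def by blast
    show "tree (fiber ?G' cV cE w')"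
    proof (cases "w' = w")
      case False
      show ?thesis
      proof (rule tree_transfer[OF trw'])
        show "verts (fiber ?G' cV cE w') = verts (fiber G cV cE w')"
          using False tprop by (auto simp: fiber_def ev)
        show "edges (fiber ?G' cV cE w') = edges (fiber G cV cE w')"
          using False tw tprop by (auto simp: fiber_def ev)
        show "\<forall>e\<in>edges (fiber G cV cE w'). org (fiber ?G' cV cE w') e = org (fiber G cV cE w') e \<and>
             tgt (fiber ?G' cV cE w') e = tgt (fiber G cV cE w') e \<and> rev (fiber ?G' cV cE w') e = rev (fiber G cV cE w') e"
        proof
          fix e assume e: "e \<in> edges (fiber G cV cE w')"
          then have "e \<in> edges G" "cE e = Inl w'" by (auto simp: fiber_def)
          then have "cV (org G e) = w'" "cV (tgt G e) = w'" using colE by fastforce+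
          then have "org G e \<noteq> tgt G t" "tgt G e \<noteq> tgt G t" using False tprop by auto
          then show "org (fiber ?G' cV cE w') e = org (fiber G cV cE w') e \<and>
             tgt (fiber ?G' cV cE w') e = tgt (fiber G cV cE w') e \<and> rev (fiber ?G' cV cE w') e = rev (fiber G cV cE w') e"
            by (simp add: fiber_def contract_def)
        qed
      qed
    next
      case True
      have sgH: "sgraph (fiber G cV cE w)" by (rule fiber_sgraph[OF sg col])
      show ?thesis unfolding True
      proof (rule tree_remove_leaf[OF sgH trw'[unfolded True]])
        show "t \<in> edges (fiber G cV cE w)" using t tw by (simp add: fiber_def)
        show "org (fiber G cV cE w) t \<noteq> tgt (fiber G cV cE w) t" using uv by (simp add: fiber_def)
        show "{e \<in> edges (fiber G cV cE w). org (fiber G cV cE w) e = tgt (fiber G cV cE w) t} =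
              {rev (fiber G cV cE w) t}" using leaf by (simp add: fiber_def)
        show "verts (fiber ?G' cV cE w) = verts (fiber G cV cE w) - {tgt (fiber G cV cE w) t}"
          by (auto simp: fiber_def ev)
        show "edges (fiber ?G' cV cE w) = edges (fiber G cV cE w) - {t, rev (fiber G cV cE w) t}"
          by (auto simp: fiber_def ev)
        show "\<forall>e\<in>edges (fiber ?G' cV cE w). org (fiber ?G' cV cE w) e = org (fiber G cV cE w) e \<and>
             tgt (fiber ?G' cV cE w) e = tgt (fiber G cV cE w) e \<and> rev (fiber ?G' cV cE w) e = rev (fiber G cV cE w) e"
        proof
          fix e assume e: "e \<in> edges (fiber ?G' cV cE w)"
          then have e1: "e \<in> edges G" "cE e = Inl w" "e \<noteq> t" "e \<noteq> rev G t" by (auto simp: fiber_def ev)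
          have o: "org G e \<noteq> tgt G t"
          proof
            assume "org G e = tgt G t"
            then have "e \<in> {e\<in>edges (fiber G cV cE w). org G e = tgt G t}" using e1 by (simp add: fiber_def)
            then show False using leaf e1 by blast
          qed
          have tg: "tgt G e \<noteq> tgt G t"
          proof
            assume "tgt G e = tgt G t"
            moreover have "cE (rev G e) = Inl w" using colE[OF e1(1)] e1(2) by simp
            ultimately have "rev G e \<in> {e\<in>edges (fiber G cV cE w). org G e = tgt G t}"
              using SF(3,6)[OF e1(1)] by (simp add: fiber_def)
            then have "rev G e = rev G t" using leaf by blast
            then have "e = t" using SF(4)[OF e1(1)] SF(4)[OF t] by metis
            then show False using e1 by simp
          qed
          show "org (fiber ?G' cV cE w) e = org (fiber G cV cE w) e \<and>
             tgt (fiber ?G' cV cE w) e = tgt (fiber G cV cE w) e \<and> rev (fiber ?G' cV cE w) e = rev (fiber G cV cE w) e"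
            using o tg by (simp add: fiber_def contract_def)
        qed
      qed
    qed
  qed
  show ?thesis unfolding collapse_def using p1 p2 p3 p4 by blast
qed



lemma collapse_edge:
  assumes "collapse G G0 cV cE" "e \<in> edges G"
  shows "case cE e of Inl w \<Rightarrow> w \<in> verts G0 \<and> cV (org G e) = w \<and> cV (tgt G e) = w \<and> cE (rev G e) = Inl w
       | Inr f \<Rightarrow> f \<in> edges G0 \<and> cV (org G e) = org G0 f \<and> cV (tgt G e) = tgt G0 f
                   \<and> cE (rev G e) = Inr (rev G0 f)"
  using assms unfolding collapse_def by blast

lemma main_base:
  fixes G :: "('v,'e) sgraph" and G0 :: "('w,'f) sgraph"
  assumes fg: "finite_sgraph G" and col: "collapse G G0 cV cE"
    and noinl: "\<not> (\<exists>e\<in>edges G. isl (cE e))"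
  shows "F_graph G (cstar cE l) = F_graph G0 l"
proof -
  have sg: "sgraph G" and fin: "finite (edges G)" using fg by (auto simp: finite_sgraph_def)
  note SF = sgraph_facts[OF sg]
  define h where "h = (\<lambda>e. projr (cE e))"
  have cEh: "cE e = Inr (h e)" if "e \<in> edges G" for e
    using noinl that unfolding h_def by (cases "cE e") auto
  have hp: "h e \<in> edges G0 \<and> cV (org G e) = org G0 (h e) \<and> cV (tgt G e) = tgt G0 (h e)
            \<and> cE (rev G e) = Inr (rev G0 (h e))" if e: "e \<in> edges G" for e
    using collapse_edge[OF col e] cEh[OF e] by simp
  have hrev: "h (rev G e) = rev G0 (h e)" if e: "e \<in> edges G" for e
    using hp[OF e] unfolding h_def by simp
  have fibE: "edges (fiber G cV cE w') = {}" for w'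
    using cEh by (auto simp: fiber_def)
  have injV: "inj_on cV (verts G)"
  proof (rule inj_onI)
    fix x y assume x: "x \<in> verts G" and y: "y \<in> verts G" and xy: "cV x = cV y"
    have "cV x \<in> verts G0" using col x unfolding collapse_def by blast
    then have "tree (fiber G cV cE (cV x))" using col unfolding collapse_def by blast
    then have c: "connected_sgraph (fiber G cV cE (cV x))" by (simp add: tree_def)
    have "x \<in> verts (fiber G cV cE (cV x))" "y \<in> verts (fiber G cV cE (cV x))"
      using x y xy by (auto simp: fiber_def)
    then obtain es where w: "walk (fiber G cV cE (cV x)) x es y"
      using c unfolding connected_sgraph_def by blast
    then have "es = []" using walk_set[OF w] fibE by auto
    then show "x = y" using w by simp
  qed
  have injh: "inj_on h (edges G)"
  proof (rule inj_onI)
    fix a b assume a: "a \<in> edges G" and b: "b \<in> edges G" and ab: "h a = h b"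
    have "h a \<in> edges G0" using hp[OF a] by simp
    then have "\<exists>!e. e \<in> edges G \<and> cE e = Inr (h a)" using col unfolding collapse_def by blast
    then show "a = b" using cEh[OF a] cEh[OF b] ab a b by metis
  qed
  have imh: "h ` edges G = edges G0"
  proof
    show "h ` edges G \<subseteq> edges G0" using hp by auto
    show "edges G0 \<subseteq> h ` edges G"
    proof
      fix f assume "f \<in> edges G0"
      then obtain e where "e \<in> edges G" "cE e = Inr f" using col unfolding collapse_def by blast
      then show "f \<in> h ` edges G" unfolding h_def by force
    qed
  qed
  have bij: "bij_betw h (edges G) (edges G0)" using injh imh by (simp add: bij_betw_def)
  show ?thesis unfolding F_graph_def
  proof (rule set_det_reindex[OF fin bij])
    fix e e' assume e: "e \<in> edges G" and e': "e' \<in> edges G"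
    have d: "e = e' \<longleftrightarrow> h e = h e'" using injh e e' by (meson inj_on_eq_iff)
    have t: "tgt G e = org G e' \<longleftrightarrow> tgt G0 (h e) = org G0 (h e')"
      using hp[OF e] hp[OF e'] injV SF(1)[OF e'] SF(2)[OF e] by (metis inj_on_eq_iff)
    have r: "e' = rev G e \<longleftrightarrow> h e' = rev G0 (h e)"
      using injh e' SF(3)[OF e] hrev[OF e] by (metis inj_on_eq_iff)
    have cs: "cstar cE l e = l (h e)" using cEh[OF e] by (simp add: cstar_def)
    show "(if e = e' then 1 else 0) - edge_matrix G (cstar cE l) e e' =
          (if h e = h e' then 1 else 0) - edge_matrix G0 l (h e) (h e')"
      unfolding edge_matrix_def using d t r cs by simp
  qed
qed

lemma main_gen:
  fixes G :: "('v,'e) sgraph" and G0 :: "('w,'f) sgraph"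
  assumes "finite_sgraph G" "finite_sgraph G0" "collapse G G0 cV cE"
  shows "F_graph G (cstar cE l) = F_graph G0 l"
  using assms
proof (induction "card {e\<in>edges G. isl (cE e)}" arbitrary: G rule: less_induct)
  case less
  have fg: "finite_sgraph G" and col: "collapse G G0 cV cE" using less.prems by auto
  have sg: "sgraph G" and fin: "finite (edges G)" using fg by (auto simp: finite_sgraph_def)
  note SF = sgraph_facts[OF sg]
  show ?case
  proof (cases "\<exists>e\<in>edges G. isl (cE e)")
    case False
    then show ?thesis by (rule main_base[OF fg col])
  next
    case True
    then obtain e0 where e0: "e0 \<in> edges G" "isl (cE e0)" by blast
    then obtain w where e0w: "cE e0 = Inl w" by (cases "cE e0") auto
    have wV: "w \<in> verts G0" using collapse_edge[OF col e0(1)] e0w by simp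
    let ?H = "fiber G cV cE w"
    have trH: "tree ?H" using col wV unfolding collapse_def by blast
    have sgH: "sgraph ?H" by (rule fiber_sgraph[OF sg col])
    have finH: "finite (edges ?H)" using fin by (simp add: fiber_def)
    have neH: "edges ?H \<noteq> {}" using e0 e0w by (auto simp: fiber_def)
    obtain t where tH: "t \<in> edges ?H" and uvH: "org ?H t \<noteq> tgt ?H t"
      and leafH: "{e\<in>edges ?H. org ?H e = tgt ?H t} = {rev ?H t}"
      using tree_leaf[OF sgH trH finH neH] by blast
    have tG: "t \<in> edges G" "cE t = Inl w" using tH by (auto simp: fiber_def)
    have uv: "org G t \<noteq> tgt G t" using uvH by (simp add: fiber_def)
    have leaf: "{e\<in>edges ?H. org G e = tgt G t} = {rev G t}" using leafH by (simp add: fiber_def)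
    have rt: "cE (rev G t) = Inl w" using collapse_edge[OF col tG(1)] tG(2) by simp
    let ?G' = "contract G t"
    have "F_graph G (cstar cE l) = F_graph ?G' (cstar cE l)"
      by (rule F_contract[OF fg tG(1) uv]) (simp_all add: cstar_def tG(2) rt)
    also have "\<dots> = F_graph G0 l"
    proof (rule less.hyps)
      have eq: "{e\<in>edges ?G'. isl (cE e)} = {e\<in>edges G. isl (cE e)} - {t, rev G t}"
        by (auto simp: contract_def)
      have "t \<in> {e\<in>edges G. isl (cE e)}" using tG by simp
      then have "{e\<in>edges ?G'. isl (cE e)} \<subset> {e\<in>edges G. isl (cE e)}" unfolding eq by blast
      then show "card {e\<in>edges ?G'. isl (cE e)} < card {e\<in>edges G. isl (cE e)}"
        by (rule psubset_card_mono[rotated]) (use fin in simp)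
      show "finite_sgraph ?G'" by (rule contract_sgraph[OF fg tG(1) uv])
      show "finite_sgraph G0" by (rule less.prems(2))
      show "collapse ?G' G0 cV cE" by (rule collapse_contract[OF sg col tG uv leaf])
    qed
    finally show ?thesis .
  qed
qed

theorem mainTheorem9:
  fixes G :: "('v, 'e) sgraph" and G0 :: "('w, 'f) sgraph"
    and cV :: "'v \<Rightarrow> 'w" and cE :: "'e \<Rightarrow> 'w + 'f" and l :: "'f \<Rightarrow> real"
  assumes "finite_sgraph G" and "connected_sgraph G"
    and "finite_sgraph G0" and "connected_sgraph G0"
    and "collapse G G0 cV cE"
    and "\<forall>f\<in>edges G0. l f > 0"
    and "\<forall>f\<in>edges G0. l (rev G0 f) = l f"
  shows "F_graph G (cstar cE l) = F_graph G0 l"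
  using main_gen[OF assms(1,3,5)] .


end
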